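(* For every $u_0\in\mathbb{R}$ there exist $\delta>0$ and a unique function $u\in C^2([0,\delta))$ with $u(0)=u_0$, $u'(0)=0$, solving $$\frac{d}{d\theta}\left(\frac{\sin\theta\,u'}{(1+u'^2)^2}\right)=\sin\theta\,\frac{u'^2-1}{(1+u'^2)^2}\qquad\text{for }\theta\in(0,\delta).$$ Moreover $u''(0)=-\tfrac12$, $u$ is strictly concave on $[0,\delta)$, and $u(\theta)=u_0-\tfrac14\theta^2+O(\theta^4)$ as $\theta\to0$.
   Context: The displayed ODE is the Euler–Lagrange equation of $R_2[u]=\int\frac{e^{-2u}}{1+|\nabla_{\mathbb{S}^2}u|^2}\,d\Omega$ restricted to rotationally symmetric functions $u=u(\theta)$, where $\theta$ is the colatitude on $\mathbb{S}^2$ (so $\theta=0$ is the pole on the rotation axis). *)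

theory Defs
  imports "HOL-Analysis.Analysis" "HOL-Library.Landau_Symbols"
begin

definition strictly_concave_on :: "real set \<Rightarrow> (real \<Rightarrow> real) \<Rightarrow> bool" where
  "strictly_concave_on S f \<longleftrightarrow> convex S \<and>
     (\<forall>x\<in>S. \<forall>y\<in>S. x \<noteq> y \<longrightarrow> (\<forall>t. 0 < t \<and> t < 1 \<longrightarrow>
        f ((1 - t) * x + t * y) > (1 - t) * f x + t * f y))"

definition C2_on_halfopen :: "real \<Rightarrow> (real \<Rightarrow> real) \<Rightarrow> (real \<Rightarrow> real) \<Rightarrow> (real \<Rightarrow> real) \<Rightarrow> bool" where
  "C2_on_halfopen \<delta> u u1 u2 \<longleftrightarrow>
     (\<forall>t\<in>{0..<\<delta>}. (u has_real_derivative u1 t) (at t within {0..<\<delta>}) \<and>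
                    (u1 has_real_derivative u2 t) (at t within {0..<\<delta>})) \<and>
     continuous_on {0..<\<delta>} u2"

definition EL_solution :: "real \<Rightarrow> real \<Rightarrow> (real \<Rightarrow> real) \<Rightarrow> (real \<Rightarrow> real) \<Rightarrow> (real \<Rightarrow> real) \<Rightarrow> bool" where
  "EL_solution u0 \<delta> u u1 u2 \<longleftrightarrow>
     C2_on_halfopen \<delta> u u1 u2 \<and> u 0 = u0 \<and> u1 0 = 0 \<and>
     (\<forall>\<theta>\<in>{0<..<\<delta>}.
        ((\<lambda>t. sin t * u1 t / (1 + (u1 t)^2)^2) has_real_derivative
           (sin \<theta> * ((u1 \<theta>)^2 - 1) / (1 + (u1 \<theta>)^2)^2)) (at \<theta>))"

end

theory Submission
  imports Defs
begin



definition fF :: "real \<Rightarrow> real" where "fF x = x / (1 + x^2)^2"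
definition gG :: "real \<Rightarrow> real" where "gG x = (x^2 - 1) / (1 + x^2)^2"
definition dF :: "real \<Rightarrow> real" where "dF x = (1 - 3*x^2) / (1 + x^2)^3"
definition dG :: "real \<Rightarrow> real" where "dG x = (6*x - 2*x^3) / (1 + x^2)^3"

lemma pos1: "(1::real) + x^2 > 0" by (simp add: add_pos_nonneg)

lemma deriv_fF: "(fF has_real_derivative dF x) (at x)"
proof -
  have "((\<lambda>x. x / (1 + x^2)^2) has_real_derivative
     (1 * (1 + x^2)^2 - x * (2 * (1 + x^2) * (2 * x))) / ((1 + x^2)^2)^2) (at x)"
    using pos1[of x] by (auto intro!: derivative_eq_intros simp: power2_eq_square)
  moreover have "(1 * (1 + x^2)^2 - x * (2 * (1 + x^2) * (2 * x))) / ((1 + x^2)^2)^2 = dF x"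
    using pos1[of x] unfolding dF_def by (simp add: divide_simps) algebra
  ultimately show ?thesis unfolding fF_def[abs_def] by simp
qed

lemma deriv_gG: "(gG has_real_derivative dG x) (at x)"
proof -
  have "((\<lambda>x. (x^2 - 1) / (1 + x^2)^2) has_real_derivative
     ((2*x) * (1 + x^2)^2 - (x^2 - 1) * (2 * (1 + x^2) * (2 * x))) / ((1 + x^2)^2)^2) (at x)"
    using pos1[of x] by (auto intro!: derivative_eq_intros simp: power2_eq_square)
  moreover have "((2*x) * (1 + x^2)^2 - (x^2 - 1) * (2 * (1 + x^2) * (2 * x))) / ((1 + x^2)^2)^2 = dG x"
    using pos1[of x] unfolding dG_def by (simp add: divide_simps) algebra
  ultimately show ?thesis unfolding gG_def[abs_def] by simp
qed

lemma dF_bounds: assumes "x^2 \<le> 1/25" shows "3/4 \<le> dF x" "dF x \<le> 1"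
proof -
  have a1: "1 \<le> (1+x^2)^3" by (simp add: one_le_power)
  have "(1+x^2)^3 \<le> (26/25)^3" by (rule power_mono) (use assms in auto)
  moreover have "(26/25::real)^3 \<le> 9/8" by (simp add: power3_eq_cube)
  ultimately have a2: "(1+x^2)^3 \<le> 9/8" by linarith
  have p: "(1+x^2)^3 > 0" using pos1[of x] by simp
  have "3/4 * (1+x^2)^3 \<le> 1 - 3*x^2" using a2 assms by linarith
  thus "3/4 \<le> dF x" unfolding dF_def using p by (simp add: le_divide_eq)
  have "1 - 3*x^2 \<le> (1+x^2)^3" using a1 zero_le_power2[of x] by linarith
  thus "dF x \<le> 1" unfolding dF_def using p by (simp add: divide_le_eq)
qed

lemma abs_div_le: fixes a b :: real assumes "1 \<le> b" shows "\<bar>a / b\<bar> \<le> \<bar>a\<bar>"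
proof -
  have "\<bar>a / b\<bar> = \<bar>a\<bar> / b" using assms by (simp add: abs_divide)
  also have "\<dots> \<le> \<bar>a\<bar>"
  proof -
    have "\<bar>a\<bar> * 1 \<le> \<bar>a\<bar> * b" using assms by (intro mult_left_mono) auto
    thus ?thesis using assms by (simp add: divide_le_eq)
  qed
  finally show ?thesis .
qed

lemma dG_bound: assumes "x^2 \<le> 1/25" shows "\<bar>dG x\<bar> \<le> 2"
proof -
  have a1: "1 \<le> (1+x^2)^3" by (simp add: one_le_power)
  have ax: "\<bar>x\<bar> \<le> 1/5"
  proof (rule ccontr)
    assume "\<not> \<bar>x\<bar> \<le> 1/5"
    hence "(1/5)^2 < \<bar>x\<bar>^2" by (intro power_strict_mono) auto
    moreover have "(1/5::real)^2 = 1/25" by (simp add: power2_eq_square)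
    ultimately show False using assms by simp
  qed
  have "\<bar>6*x - 2*x^3\<bar> \<le> \<bar>6*x\<bar> + \<bar>2*x^3\<bar>" by (rule abs_triangle_ineq4)
  also have "\<dots> = 6*\<bar>x\<bar> + 2*(\<bar>x\<bar>*x^2)" by (simp add: abs_mult power3_eq_cube power2_eq_square)
  also have "\<dots> \<le> 6*(1/5) + 2*((1/5)*(1/25))" using ax assms by (intro add_mono mult_left_mono mult_mono) auto
  finally have n: "\<bar>6*x - 2*x^3\<bar> \<le> 2" by simp
  have "\<bar>dG x\<bar> \<le> \<bar>6*x - 2*x^3\<bar>" unfolding dG_def by (rule abs_div_le[OF a1])
  thus ?thesis using n by simp
qed

lemma phi_small: assumes "x^2 \<le> 1" shows "\<bar>x - fF x\<bar> \<le> 3*\<bar>x\<bar>^3"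
proof -
  have p: "1 \<le> (1+x^2)^2" by (simp add: one_le_power)
  have e: "x - fF x = x * (2*x^2 + x^4) / (1+x^2)^2" unfolding fF_def using pos1[of x]
    by (simp add: divide_simps) algebra
  have "\<bar>x - fF x\<bar> \<le> \<bar>x * (2*x^2 + x^4)\<bar>" unfolding e by (rule abs_div_le[OF p])
  also have "\<dots> = \<bar>x\<bar> * (2*x^2 + x^4)" by (simp add: abs_mult)
  also have "\<dots> \<le> \<bar>x\<bar> * (3 * x^2)"
  proof -
    have "x^4 = x^2 * x^2" by algebra
    also have "\<dots> \<le> 1 * x^2" using assms by (intro mult_right_mono) auto
    finally have "x^4 \<le> x^2" by simp
    thus ?thesis by (intro mult_left_mono) auto
  qed
  also have "\<dots> = 3*\<bar>x\<bar>^3" by (simp add: power2_eq_square power3_eq_cube abs_mult_self_eq)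
  finally show ?thesis .
qed

lemma gG_plus1: "\<bar>gG x + 1\<bar> \<le> 3*x^2"
proof -
  have p: "(1+x^2)^2 > 0" using pos1[of x] by simp
  have e: "gG x + 1 = (3*x^2 + x^4) / (1+x^2)^2" unfolding gG_def using p
    by (simp add: divide_simps) algebra
  have d: "3*x^2 * (1+x^2)^2 - (3*x^2 + x^4) = 5*(x^2)^2 + 3*(x^3)^2" by algebra
  have "0 \<le> 5*(x^2)^2 + 3*(x^3)^2" by simp
  hence "(3*x^2 + x^4) \<le> 3*x^2 * (1+x^2)^2" using d by linarith
  moreover have "0 \<le> 3*x^2 + x^4" by simp
  ultimately show ?thesis unfolding e using p by (simp add: divide_le_eq)
qed

lemma gG_abs: "\<bar>gG x\<bar> \<le> 1"
proof -
  have p: "(1+x^2)^2 > 0" using pos1[of x] by simp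
  have d: "(1+x^2)^2 = 1 + 2*x^2 + (x^2)^2" by algebra
  have "\<bar>x^2 - 1\<bar> \<le> (1+x^2)^2" unfolding d using zero_le_power2[of x] zero_le_power2[of "x^2"] by linarith
  thus ?thesis unfolding gG_def using p by (simp add: abs_divide divide_le_eq)
qed




lemma sin_taylor3: fixes x :: real shows "\<bar>sin x - x\<bar> \<le> \<bar>x\<bar>^3 / 6"
proof -
  have "\<bar>sin x - (\<Sum>m<3. sin_coeff m * x ^ m)\<bar> \<le> inverse (fact 3) * \<bar>x\<bar> ^ 3"
    by (rule Maclaurin_sin_bound)
  moreover have "(\<Sum>m<3. sin_coeff m * x ^ m) = x"
    by (simp add: sin_coeff_def eval_nat_numeral)
  moreover have "inverse (fact 3) = (1/6::real)" by (simp add: eval_nat_numeral)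
  ultimately show ?thesis by simp
qed

lemma cos_taylor4: fixes x :: real shows "\<bar>cos x - (1 - x^2/2)\<bar> \<le> x^4 / 24"
proof -
  obtain t where t: "cos x = (\<Sum>m<4. cos_coeff m * x ^ m) + (cos(t + 1/2 * real 4 * pi) / fact 4) * x ^ 4"
    using Maclaurin_cos_expansion[of x 4] by blast
  have "{..<4::nat} = {0,1,2,3}" by auto
  hence s: "(\<Sum>m<4. cos_coeff m * x ^ m) = 1 - x^2/2"
    by (simp add: cos_coeff_def)
  have f: "fact 4 = (24::real)" by (simp add: eval_nat_numeral)
  have "\<bar>cos(t + 1/2 * real 4 * pi) / fact 4 * x ^ 4\<bar> \<le> 1/24 * x^4"
    unfolding f abs_mult by (intro mult_mono) (auto simp: abs_divide)
  thus ?thesis using t s by simp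
qed

lemma sin_lower: fixes t :: real assumes "0 \<le> t" "t \<le> 1/2" shows "9/10 * t \<le> sin t"
proof -
  have "\<bar>t\<bar>^3 = t * t^2" using assms by (simp add: power2_eq_square power3_eq_cube)
  also have "\<dots> \<le> t * (1/2)^2" using assms by (intro mult_left_mono power_mono) auto
  finally have "\<bar>t\<bar>^3 / 6 \<le> t/24" by (simp add: power2_eq_square)
  hence h: "\<bar>sin t - t\<bar> \<le> t/24" using sin_taylor3[of t] by linarith
  thus ?thesis using abs_ge_minus_self[of "sin t - t"] by linarith
qed

lemma sin_pos: fixes t :: real assumes "0 < t" "t \<le> 1/2" shows "0 < sin t"
  using sin_lower[of t] assms by linarith

lemma sin_mono: fixes s t :: real assumes "0 \<le> s" "s \<le> t" "t \<le> 1" shows "sin s \<le> sin t"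
proof -
  have "1 \<le> pi/2" using pi_gt3 by linarith
  thus ?thesis using assms by (intro sin_monotone_2pi_le) auto
qed

lemma tan_half_bound: fixes t :: real assumes "0 < t" "t \<le> 1/2"
  shows "\<bar>(1 - cos t) / sin t - t/2\<bar> \<le> t^3 / 4"
proof -
  have sp: "sin t \<ge> 9/10 * t" using sin_lower assms by auto
  hence sp0: "sin t > 0" using assms by linarith
  have e: "(1 - cos t) / sin t - t/2 = (2*(1 - cos t) - t * sin t) / (2 * sin t)"
    using sp0 by (simp add: field_simps)
  have c1: "cos t - (1 - t^2/2) \<le> t^4/24" using abs_le_D1[OF cos_taylor4[of t]] .
  have c2: "-(cos t - (1 - t^2/2)) \<le> t^4/24" using abs_le_D2[OF cos_taylor4[of t]] .
  have e1: "2*(1 - cos t) - t^2 = -2*(cos t - (1 - t^2/2))" by (simp add: algebra_simps)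
  have n1: "\<bar>2*(1 - cos t) - t^2\<bar> \<le> t^4/12" unfolding e1 abs_mult using cos_taylor4[of t] by simp
  have e2: "t * sin t - t^2 = t * (sin t - t)" by (simp add: algebra_simps power2_eq_square)
  have "\<bar>t * sin t - t^2\<bar> = t * \<bar>sin t - t\<bar>" unfolding e2 abs_mult using assms by simp
  also have "\<dots> \<le> t * (t^3/6)" using sin_taylor3[of t] assms by (intro mult_left_mono) auto
  finally have n2: "\<bar>t * sin t - t^2\<bar> \<le> t^4/6" by (simp add: power_def)
  have n: "\<bar>2*(1 - cos t) - t * sin t\<bar> \<le> t^4/4"
    using abs_le_D1[OF n1] abs_le_D2[OF n1] abs_le_D1[OF n2] abs_le_D2[OF n2] by (intro abs_leI) linarith+
  have "\<bar>(2*(1 - cos t) - t * sin t) / (2 * sin t)\<bar> = \<bar>2*(1 - cos t) - t * sin t\<bar> / (2 * sin t)"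
    using sp0 by (simp add: abs_divide)
  also have "\<dots> \<le> (t^4/4) / (2 * sin t)" using sp0 n by (intro divide_right_mono) auto
  also have "\<dots> \<le> (t^4/4) / t" using sp0 sp assms by (intro divide_left_mono) auto
  also have "\<dots> = t^3/4" using assms by (simp add: power_def field_simps)
  finally show ?thesis using e by simp
qed

lemma mvt_deriv:
  fixes f f' :: "real \<Rightarrow> real"
  assumes "a < b" "continuous_on {a..b} f" "\<And>x. a < x \<Longrightarrow> x < b \<Longrightarrow> (f has_real_derivative f' x) (at x)"
  shows "\<exists>z. a < z \<and> z < b \<and> f b - f a = (b - a) * f' z"
proof -
  have "\<And>x. a < x \<Longrightarrow> x < b \<Longrightarrow> f differentiable (at x)"
    using assms(3) real_differentiable_def by blast
  then obtain l z where "a < z" "z < b" "DERIV f z :> l" "f b - f a = (b - a) * l"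
    using MVT[OF assms(1,2)] by blast
  moreover have "l = f' z" using DERIV_unique[OF \<open>DERIV f z :> l\<close> assms(3)[OF \<open>a<z\<close> \<open>z<b\<close>]] .
  ultimately show ?thesis by blast
qed

lemma lip_deriv:
  fixes F F' :: "real \<Rightarrow> real"
  assumes d: "\<And>z. \<bar>z\<bar> \<le> r \<Longrightarrow> (F has_real_derivative F' z) (at z)"
    and b: "\<And>z. \<bar>z\<bar> \<le> r \<Longrightarrow> \<bar>F' z\<bar> \<le> L"
    and x: "\<bar>x\<bar> \<le> r" and y: "\<bar>y\<bar> \<le> r"
  shows "\<bar>F x - F y\<bar> \<le> L * \<bar>x - y\<bar>"
proof -
  have *: "\<bar>F b - F a\<bar> \<le> L * \<bar>b - a\<bar>" if "a < b" "\<bar>a\<bar> \<le> r" "\<bar>b\<bar> \<le> r" for a b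
  proof -
    have "(F has_real_derivative F' x) (at x)" if "a \<le> x" "x \<le> b" for x
      using d \<open>\<bar>a\<bar> \<le> r\<close> \<open>\<bar>b\<bar> \<le> r\<close> that by (intro d) (simp add: abs_le_iff)
    then obtain z where z: "a < z" "z < b" "F b - F a = (b - a) * F' z"
      using MVT2[OF \<open>a < b\<close>] by blast
    have "\<bar>z\<bar> \<le> r" using z that by auto
    hence "\<bar>F' z\<bar> \<le> L" by (rule b)
    thus ?thesis unfolding z(3) abs_mult using that
      by (simp add: mult.commute mult_left_mono)
  qed
  consider "x < y" | "x = y" | "y < x" by linarith
  thus ?thesis
  proof cases
    case 1 thus ?thesis using *[of x y] x y by (simp add: abs_minus_commute)
  next
    case 2 thus ?thesis using b[of x] x by auto
  next
    case 3 thus ?thesis using *[of y x] x y by (simp add: abs_minus_commute)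
  qed
qed

lemma sq_le: fixes z :: real assumes "\<bar>z\<bar> \<le> 1/5" shows "z^2 \<le> 1/25"
proof -
  have "\<bar>z\<bar>^2 \<le> (1/5)^2" using assms by (intro power_mono) auto
  thus ?thesis by (simp add: power2_eq_square)
qed

lemma lip_phi: fixes x y :: real assumes "\<bar>x\<bar> \<le> 1/5" "\<bar>y\<bar> \<le> 1/5"
  shows "\<bar>(x - fF x) - (y - fF y)\<bar> \<le> 1/4 * \<bar>x - y\<bar>"
proof (rule lip_deriv[where F="\<lambda>z. z - fF z" and F'="\<lambda>z. 1 - dF z" and r="1/5"])
  show "((\<lambda>z. z - fF z) has_real_derivative 1 - dF z) (at z)" for z
    by (intro derivative_intros deriv_fF)
  show "\<bar>1 - dF z\<bar> \<le> 1/4" if "\<bar>z\<bar> \<le> 1/5" for z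
    using dF_bounds[OF sq_le[OF that]] by simp
qed (use assms in auto)

lemma lip_gG: fixes x y :: real assumes "\<bar>x\<bar> \<le> 1/5" "\<bar>y\<bar> \<le> 1/5"
  shows "\<bar>gG x - gG y\<bar> \<le> 2 * \<bar>x - y\<bar>"
  by (rule lip_deriv[where F'="dG" and r="1/5"]) (use deriv_gG dG_bound sq_le assms in auto)

lemma fF_low: fixes x y :: real assumes "\<bar>x\<bar> \<le> 1/5" "\<bar>y\<bar> \<le> 1/5"
  shows "3/4 * \<bar>x - y\<bar> \<le> \<bar>fF x - fF y\<bar>"
proof -
  have *: "3/4 * (b - a) \<le> fF b - fF a" if "a < b" "\<bar>a\<bar> \<le> 1/5" "\<bar>b\<bar> \<le> 1/5" for a b
  proof -
    obtain z where z: "a < z" "z < b" "fF b - fF a = (b - a) * dF z"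
      using MVT2[OF \<open>a < b\<close>, of fF dF] deriv_fF by blast
    have "\<bar>z\<bar> \<le> 1/5" using z that by auto
    hence "3/4 \<le> dF z" using dF_bounds sq_le by blast
    hence "3/4 * (b - a) \<le> dF z * (b - a)" using that by (intro mult_right_mono) auto
    thus ?thesis unfolding z(3) by (simp add: mult.commute)
  qed
  consider "x < y" | "x = y" | "y < x" by linarith
  thus ?thesis
  proof cases
    case 1 thus ?thesis using *[of x y] assms by (simp add: abs_minus_commute abs_if)
  next
    case 2 thus ?thesis by auto
  next
    case 3 thus ?thesis using *[of y x] assms by (simp add: abs_minus_commute abs_if)
  qed
qed

lemma pos1ne: "(1::real) + x^2 \<noteq> 0" using pos1[of x] by linarith

lemma cont_gG: "continuous_on S gG"
  unfolding gG_def by (intro continuous_intros) (auto simp: pos1ne)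

lemma cont_fF: "continuous_on S fF"
  unfolding fF_def by (intro continuous_intros) (auto simp: pos1ne)

lemma cont_dF: "continuous_on S dF"
  unfolding dF_def by (intro continuous_intros) (auto simp: pos1ne)




definition II :: "(real \<Rightarrow> real) \<Rightarrow> real \<Rightarrow> real" where
  "II q t = integral {0..t} (\<lambda>s. sin s * gG (q s))"

definition Tf :: "(real \<Rightarrow> real) \<Rightarrow> real \<Rightarrow> real" where
  "Tf q t = q t - fF (q t) + II q t / sin t"

definition bandP :: "(real \<Rightarrow> real) \<Rightarrow> bool" where
  "bandP q \<longleftrightarrow> (\<forall>s. 0 \<le> s \<and> s \<le> 1/10 \<longrightarrow> \<bar>q s + s/2\<bar> \<le> 20 * s^3)"

lemma sin_nn: fixes s :: real assumes "0 \<le> s" "s \<le> 1" shows "0 \<le> sin s"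
proof -
  have "s \<le> pi" using assms pi_gt3 by linarith
  thus ?thesis using assms by (intro sin_ge_zero) auto
qed

lemma ev_within: "(\<And>x. x \<in> S \<Longrightarrow> P x) \<Longrightarrow> eventually P (at a within S)"
  unfolding eventually_at_filter by (auto intro!: always_eventually)

lemma cube_small: fixes s :: real assumes "0 \<le> s" "s \<le> 1/10" shows "20 * s^3 \<le> s/5"
proof -
  have "s^2 \<le> (1/10)^2" using assms by (intro power_mono) auto
  hence "s * s^2 \<le> s * (1/100)" using assms by (intro mult_left_mono) (auto simp: power2_eq_square)
  thus ?thesis by (simp add: power3_eq_cube power2_eq_square)
qed

lemma band_abs: assumes "bandP q" "0 \<le> s" "s \<le> 1/10" shows "\<bar>q s\<bar> \<le> 7/10 * s"
proof -
  have "\<bar>q s + s/2\<bar> \<le> 20 * s^3" using assms unfolding bandP_def by auto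
  thus ?thesis using cube_small[OF assms(2,3)] abs_triangle_ineq4[of "q s + s/2" "s/2"] assms(2)
    by (simp add: abs_of_nonneg)
qed

lemma band_abs2: assumes "bandP q" "0 \<le> s" "s \<le> 1/10" shows "\<bar>q s\<bar> \<le> s" "\<bar>q s\<bar> \<le> 1/5"
  using band_abs[OF assms] assms by auto

lemma band_zero: assumes "bandP q" shows "q 0 = 0"
  using band_abs[OF assms, of 0] by simp

lemma cont_comp: assumes "continuous_on UNIV q" shows "continuous_on S (\<lambda>s. gG (q s))"
  by (rule continuous_on_compose2[OF cont_gG[of UNIV] continuous_on_subset[OF assms]]) auto

lemma cont_compF: assumes "continuous_on UNIV q" shows "continuous_on S (\<lambda>s. fF (q s))"
  by (rule continuous_on_compose2[OF cont_fF[of UNIV] continuous_on_subset[OF assms]]) auto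

lemma cont_compdF: assumes "continuous_on UNIV q" shows "continuous_on S (\<lambda>s. dF (q s))"
  by (rule continuous_on_compose2[OF cont_dF[of UNIV] continuous_on_subset[OF assms]]) auto

lemma cont_integrand: assumes "continuous_on UNIV q" shows "continuous_on S (\<lambda>s. sin s * gG (q s))"
  by (intro continuous_intros cont_comp assms)

lemma int_bound:
  fixes F :: "real \<Rightarrow> real"
  assumes "0 \<le> t" "continuous_on {0..t} F" "\<And>s. s \<in> {0..t} \<Longrightarrow> \<bar>F s\<bar> \<le> B"
  shows "\<bar>integral {0..t} F\<bar> \<le> B * t"
proof -
  have B: "0 \<le> B" using assms(3)[of 0] assms(1) by auto
  have "(F has_integral integral {0..t} F) {0..t}"
    using integrable_continuous_real[OF assms(2)] by (rule integrable_integral)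
  from has_integral_bound_real[OF B _ this, of "{}"] assms(3) content_real[OF assms(1)]
  show ?thesis by auto
qed

lemma II_deriv: assumes "continuous_on UNIV q" "t \<in> {0..b}"
  shows "(II q has_real_derivative sin t * gG (q t)) (at t within {0..b})"
  unfolding II_def[abs_def]
  by (rule integral_has_real_derivative[OF cont_integrand[OF assms(1)] assms(2)])

lemma II_zero: "II q 0 = 0" by (simp add: II_def)

lemma II_abs: assumes "continuous_on UNIV q" "0 \<le> t" "t \<le> 1/2" shows "\<bar>II q t\<bar> \<le> sin t * t"
  unfolding II_def
proof (rule int_bound[OF assms(2) cont_integrand[OF assms(1)]])
  fix s assume s: "s \<in> {0..t}"
  have "0 \<le> sin s" "sin s \<le> sin t" using s assms by (auto intro!: sin_nn sin_mono)
  hence "\<bar>sin s * gG (q s)\<bar> \<le> sin t * 1" unfolding abs_mult using gG_abs[of "q s"]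
    by (intro mult_mono) auto
  thus "\<bar>sin s * gG (q s)\<bar> \<le> sin t" by simp
qed

lemma one_minus_cos: fixes t :: real assumes "0 \<le> t" shows "integral {0..t} sin = 1 - cos t"
proof -
  have "(sin has_integral ((\<lambda>x. - cos x) t - (\<lambda>x. - cos x) 0)) {0..t}"
  proof (rule fundamental_theorem_of_calculus[where f="\<lambda>x. - cos x"])
    show "0 \<le> t" by (rule assms)
    fix x assume "x \<in> {0..t}"
    have "((\<lambda>x. - cos x) has_real_derivative sin x) (at x within {0..t})"
      by (auto intro!: derivative_eq_intros)
    thus "((\<lambda>x. - cos x) has_vector_derivative sin x) (at x within {0..t})"
      by (simp add: has_real_derivative_iff_has_vector_derivative)
  qed
  thus ?thesis by (simp add: integral_unique)
qed

lemma II_plus: assumes "continuous_on UNIV q" "bandP q" "0 \<le> t" "t \<le> 1/10"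
  shows "\<bar>II q t + (1 - cos t)\<bar> \<le> 3 * t^4"
proof -
  have i1: "(\<lambda>s. sin s * gG (q s)) integrable_on {0..t}"
    by (rule integrable_continuous_real[OF cont_integrand[OF assms(1)]])
  have i2: "sin integrable_on {0..t}"
    by (rule integrable_continuous_real) (intro continuous_intros)
  have "II q t + (1 - cos t) = integral {0..t} (\<lambda>s. sin s * gG (q s) + sin s)"
    unfolding II_def one_minus_cos[OF assms(3), symmetric] using integral_add[OF i1 i2] by simp
  also have "\<dots> = integral {0..t} (\<lambda>s. sin s * (gG (q s) + 1))"
    by (simp add: distrib_left)
  finally have e: "II q t + (1 - cos t) = integral {0..t} (\<lambda>s. sin s * (gG (q s) + 1))" .
  have "\<bar>integral {0..t} (\<lambda>s. sin s * (gG (q s) + 1))\<bar> \<le> (t * (3 * t^2)) * t"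
  proof (rule int_bound[OF assms(3)])
    show "continuous_on {0..t} (\<lambda>s. sin s * (gG (q s) + 1))"
      by (intro continuous_intros cont_comp assms(1))
    fix s assume s: "s \<in> {0..t}"
    have s0: "0 \<le> s" "s \<le> 1/10" using s assms by auto
    have "0 \<le> sin s" using s0 by (intro sin_nn) auto
    moreover have "sin s \<le> t" using sin_x_le_x[of s] s by auto
    ultimately have a: "\<bar>sin s\<bar> \<le> t" by simp
    have "\<bar>q s\<bar> \<le> t" using band_abs2(1)[OF assms(2) s0] s by auto
    hence "\<bar>q s\<bar>^2 \<le> t^2" by (intro power_mono) auto
    hence "\<bar>gG (q s) + 1\<bar> \<le> 3 * t^2" using gG_plus1[of "q s"] by simp
    thus "\<bar>sin s * (gG (q s) + 1)\<bar> \<le> t * (3 * t^2)" unfolding abs_mult using a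
      by (intro mult_mono) auto
  qed
  thus ?thesis unfolding e by (simp add: power_def algebra_simps)
qed

lemma Tf_band: assumes "continuous_on UNIV q" "bandP q" "0 \<le> t" "t \<le> 1/10"
  shows "\<bar>Tf q t + t/2\<bar> \<le> 20 * t^3"
proof (cases "t = 0")
  case True thus ?thesis using band_zero[OF assms(2)] by (simp add: Tf_def II_zero fF_def)
next
  case False
  hence t: "0 < t" using assms by auto
  define x where "x = q t"
  have sp: "sin t \<ge> 9/10 * t" using sin_lower[of t] t assms by auto
  hence sp0: "sin t > 0" using t by linarith
  have e: "Tf q t + t/2 = (x - fF x) + (II q t + (1 - cos t)) / sin t - ((1 - cos t) / sin t - t/2)"
    unfolding Tf_def x_def using sp0 by (simp add: field_simps)
  have ax: "\<bar>x\<bar> \<le> t" using band_abs2(1)[OF assms(2,3,4)] x_def by simp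
  have "\<bar>x\<bar>^2 \<le> 1" using ax assms by (intro power_le_one) auto
  hence "\<bar>x - fF x\<bar> \<le> 3 * \<bar>x\<bar>^3" using phi_small by simp
  also have "\<dots> \<le> 3 * t^3" using ax by (intro mult_left_mono power_mono) auto
  finally have b1: "\<bar>x - fF x\<bar> \<le> 3 * t^3" .
  have "\<bar>(II q t + (1 - cos t)) / sin t\<bar> = \<bar>II q t + (1 - cos t)\<bar> / sin t" using sp0 by (simp add: abs_divide)
  also have "\<dots> \<le> (3 * t^4) / sin t" using II_plus[OF assms] sp0 by (intro divide_right_mono) auto
  also have "\<dots> \<le> (3 * t^4) / (9/10 * t)" using sp t by (intro divide_left_mono) auto
  also have "\<dots> = 10/3 * t^3" using t by (simp add: power_def field_simps)
  finally have b2: "\<bar>(II q t + (1 - cos t)) / sin t\<bar> \<le> 10/3 * t^3" .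
  have b3: "\<bar>(1 - cos t) / sin t - t/2\<bar> \<le> t^3/4" using tan_half_bound[of t] t assms by auto
  have "0 \<le> t^3" using t by simp
  thus ?thesis unfolding e using b1 b2 b3 abs_triangle_ineq[of "(x - fF x)" "(II q t + (1 - cos t)) / sin t"]
      abs_triangle_ineq4[of "(x - fF x) + (II q t + (1 - cos t)) / sin t" "(1 - cos t) / sin t - t/2"]
    by linarith
qed

lemma R_cont: assumes "continuous_on UNIV q"
  shows "continuous_on {0..1/10} (\<lambda>t. II q t / sin t)"
  unfolding continuous_on_eq_continuous_within
proof
  fix t :: real assume t: "t \<in> {0..1/10}"
  show "continuous (at t within {0..1/10}) (\<lambda>t. II q t / sin t)"
  proof (cases "t = 0")
    case True
    have "((\<lambda>t. II q t / sin t) \<longlongrightarrow> 0) (at 0 within {0..1/10})"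
    proof (rule Lim_null_comparison)
      show "\<forall>\<^sub>F x in at 0 within {0..1/10}. norm (II q x / sin x) \<le> x"
      proof (rule ev_within)
        fix x :: real assume x: "x \<in> {0..1/10}"
        show "norm (II q x / sin x) \<le> x"
        proof (cases "x = 0")
          case True thus ?thesis by simp
        next
          case False
          hence sp: "sin x > 0" using x by (intro sin_pos) auto
          have "\<bar>II q x\<bar> \<le> sin x * x" using II_abs[OF assms, of x] x by auto
          thus ?thesis using sp by (simp add: abs_divide divide_le_eq mult.commute)
        qed
      qed
      show "((\<lambda>x. x) \<longlongrightarrow> 0) (at 0 within {0..1/10})" by (rule tendsto_ident_at)
    qed
    thus ?thesis using True by (simp add: continuous_within II_zero)
  next
    case False
    hence sp: "sin t \<noteq> 0" using t sin_pos[of t] by auto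
    have "(II q \<longlongrightarrow> II q t) (at t within {0..1/10})"
      using DERIV_continuous[OF II_deriv[OF assms t]] by (simp add: continuous_within)
    moreover have "(sin \<longlongrightarrow> sin t) (at t within {0..1/10})"
      by (intro tendsto_intros)
    ultimately show ?thesis unfolding continuous_within using sp by (intro tendsto_divide) auto
  qed
qed

lemma Tf_cont: assumes "continuous_on UNIV q"
  shows "continuous_on {0..1/10} (Tf q)"
proof -
  have "continuous_on {0..1/10} (\<lambda>t. q t - fF (q t) + II q t / sin t)"
    by (intro continuous_on_add continuous_on_diff R_cont assms cont_compF continuous_on_subset[OF assms]) auto
  thus ?thesis unfolding Tf_def[abs_def] .
qed

lemma Tf_contr: assumes c1: "continuous_on UNIV q1" and c2: "continuous_on UNIV q2"
  and b1: "bandP q1" and b2: "bandP q2"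
  and D: "\<And>s. 0 \<le> s \<Longrightarrow> s \<le> 1/10 \<Longrightarrow> \<bar>q1 s - q2 s\<bar> \<le> D"
  and t: "0 \<le> t" "t \<le> 1/10"
  shows "\<bar>Tf q1 t - Tf q2 t\<bar> \<le> D/2"
proof -
  have e: "Tf q1 t - Tf q2 t = ((q1 t - fF (q1 t)) - (q2 t - fF (q2 t))) + (II q1 t - II q2 t) / sin t"
    unfolding Tf_def by (simp add: diff_divide_distrib)
  have D0: "0 \<le> D" using D[of 0] by simp
  have "\<bar>(q1 t - fF (q1 t)) - (q2 t - fF (q2 t))\<bar> \<le> 1/4 * \<bar>q1 t - q2 t\<bar>"
    using band_abs2(2)[OF b1 t] band_abs2(2)[OF b2 t] by (rule lip_phi)
  also have "\<dots> \<le> 1/4 * D" using D[OF t] by simp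
  finally have p1: "\<bar>(q1 t - fF (q1 t)) - (q2 t - fF (q2 t))\<bar> \<le> 1/4 * D" .
  have p2: "\<bar>(II q1 t - II q2 t) / sin t\<bar> \<le> 1/5 * D"
  proof (cases "t = 0")
    case True thus ?thesis using D0 by simp
  next
    case False
    hence sp: "sin t > 0" using t by (intro sin_pos) auto
    have i1: "(\<lambda>s. sin s * gG (q1 s)) integrable_on {0..t}"
      by (rule integrable_continuous_real[OF cont_integrand[OF c1]])
    have i2: "(\<lambda>s. sin s * gG (q2 s)) integrable_on {0..t}"
      by (rule integrable_continuous_real[OF cont_integrand[OF c2]])
    have "II q1 t - II q2 t = integral {0..t} (\<lambda>s. sin s * gG (q1 s) - sin s * gG (q2 s))"
      unfolding II_def using integral_diff[OF i1 i2] by simp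
    also have "\<bar>\<dots>\<bar> \<le> (sin t * (2 * D)) * t"
    proof (rule int_bound[OF t(1)])
      show "continuous_on {0..t} (\<lambda>s. sin s * gG (q1 s) - sin s * gG (q2 s))"
        by (intro continuous_intros cont_comp c1 c2)
      fix s assume s: "s \<in> {0..t}"
      have s0: "0 \<le> s" "s \<le> 1/10" using s t by auto
      have "0 \<le> sin s" "sin s \<le> sin t" using s t by (auto intro!: sin_nn sin_mono)
      moreover have "\<bar>gG (q1 s) - gG (q2 s)\<bar> \<le> 2 * D"
      proof -
        have "2 * \<bar>q1 s - q2 s\<bar> \<le> 2 * D" using D[OF s0] by simp
        thus ?thesis using lip_gG[OF band_abs2(2)[OF b1 s0] band_abs2(2)[OF b2 s0]] by (rule order_trans[rotated])
      qed
      ultimately have "\<bar>sin s * (gG (q1 s) - gG (q2 s))\<bar> \<le> sin t * (2 * D)"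
        unfolding abs_mult by (intro mult_mono) auto
      thus "\<bar>sin s * gG (q1 s) - sin s * gG (q2 s)\<bar> \<le> sin t * (2 * D)"
        by (simp add: right_diff_distrib)
    qed
    finally have "\<bar>II q1 t - II q2 t\<bar> \<le> sin t * (2 * D * t)" by (simp add: mult.assoc)
    hence "\<bar>(II q1 t - II q2 t) / sin t\<bar> \<le> 2 * D * t" using sp
      by (simp add: abs_divide divide_le_eq mult.commute)
    also have "\<dots> \<le> 2 * D * (1/10)" using t D0 by (intro mult_left_mono) auto
    finally show ?thesis by simp
  qed
  show ?thesis unfolding e using p1 p2 abs_triangle_ineq[of "(q1 t - fF (q1 t)) - (q2 t - fF (q2 t))" "(II q1 t - II q2 t) / sin t"]
    by linarith
qed




definition clampd :: "real \<Rightarrow> real" where "clampd t = max 0 (min (1/10) t)"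

definition bandf :: "(real \<Rightarrow> real) \<Rightarrow> real \<Rightarrow> real" where
  "bandf p s = max (-s/2 - 20 * s^3) (min (-s/2 + 20 * s^3) (p s))"

lemma bandf_band: "bandP (bandf p)"
  unfolding bandP_def
proof (intro allI impI)
  fix s :: real assume s: "0 \<le> s \<and> s \<le> 1/10"
  have c: "0 \<le> 20 * s^3" using s by simp
  have l: "-s/2 - 20 * s^3 \<le> bandf p s" unfolding bandf_def by simp
  have u: "bandf p s \<le> -s/2 + 20 * s^3" unfolding bandf_def using c by simp
  show "\<bar>bandf p s + s/2\<bar> \<le> 20 * s^3" using l u by (intro abs_leI) linarith+
qed

lemma bandf_cont: "continuous_on UNIV p \<Longrightarrow> continuous_on UNIV (bandf p)"
  unfolding bandf_def[abs_def] by (intro continuous_intros) auto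

lemma min_lip: fixes b x y :: real shows "\<bar>min b x - min b y\<bar> \<le> \<bar>x - y\<bar>"
  unfolding min_def abs_if by auto

lemma max_lip: fixes b x y :: real shows "\<bar>max b x - max b y\<bar> \<le> \<bar>x - y\<bar>"
  unfolding max_def abs_if by auto

lemma bandf_lip: "\<bar>bandf p1 s - bandf p2 s\<bar> \<le> \<bar>p1 s - p2 s\<bar>"
  unfolding bandf_def using max_lip min_lip order_trans by blast

lemma bandf_id: assumes "\<bar>p s + s/2\<bar> \<le> 20 * s^3" shows "bandf p s = p s"
proof -
  have "-s/2 - 20 * s^3 \<le> p s" "p s \<le> -s/2 + 20 * s^3" using abs_le_D1[OF assms] abs_le_D2[OF assms] by linarith+
  thus ?thesis unfolding bandf_def by simp
qed

lemma clampd_cont: "continuous_on UNIV clampd"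
  unfolding clampd_def[abs_def] by (intro continuous_intros)

lemma clampd_range: "clampd t \<in> {0..1/10}" unfolding clampd_def by auto

lemma clampd_id: "t \<in> {0..1/10} \<Longrightarrow> clampd t = t" unfolding clampd_def by auto

definition TT :: "(real \<Rightarrow>\<^sub>C real) \<Rightarrow> (real \<Rightarrow>\<^sub>C real)" where
  "TT p = Bcontfun (\<lambda>t. Tf (bandf (apply_bcontfun p)) (clampd t))"

lemma TT_mem: "(\<lambda>t. Tf (bandf (apply_bcontfun p)) (clampd t)) \<in> bcontfun"
proof (rule bcontfun_normI)
  let ?q = "bandf (apply_bcontfun p)"
  have cq: "continuous_on UNIV ?q" by (intro bandf_cont) simp
  show "continuous_on UNIV (\<lambda>t. Tf ?q (clampd t))"
    by (rule continuous_on_compose2[OF Tf_cont[OF cq] clampd_cont]) (auto simp: clampd_def)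
  fix t
  let ?c = "clampd t"
  have c: "0 \<le> ?c" "?c \<le> 1/10" using clampd_range[of t] by auto
  have "\<bar>Tf ?q ?c + ?c/2\<bar> \<le> 20 * ?c^3" by (rule Tf_band[OF cq bandf_band c])
  moreover have "20 * ?c^3 \<le> ?c/5" by (rule cube_small[OF c])
  ultimately show "norm (Tf ?q ?c) \<le> 1" using c by simp
qed

lemma TT_apply: "apply_bcontfun (TT p) t = Tf (bandf (apply_bcontfun p)) (clampd t)"
  unfolding TT_def using Bcontfun_inverse[OF TT_mem] by simp

lemma TT_contr: "dist (TT p1) (TT p2) \<le> 1/2 * dist p1 p2"
proof (rule dist_bound)
  fix t
  let ?q1 = "bandf (apply_bcontfun p1)" and ?q2 = "bandf (apply_bcontfun p2)"
  have c: "0 \<le> clampd t" "clampd t \<le> 1/10" using clampd_range[of t] by auto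
  have "\<bar>Tf ?q1 (clampd t) - Tf ?q2 (clampd t)\<bar> \<le> dist p1 p2 / 2"
  proof (rule Tf_contr[OF bandf_cont bandf_cont bandf_band bandf_band _ c])
    fix s
    have "\<bar>?q1 s - ?q2 s\<bar> \<le> \<bar>apply_bcontfun p1 s - apply_bcontfun p2 s\<bar>" by (rule bandf_lip)
    also have "\<dots> \<le> dist p1 p2" using dist_bounded[of p1 s p2] by (simp add: dist_real_def)
    finally show "\<bar>?q1 s - ?q2 s\<bar> \<le> dist p1 p2" .
  qed auto
  thus "dist (apply_bcontfun (TT p1) t) (apply_bcontfun (TT p2) t) \<le> 1/2 * dist p1 p2"
    by (simp add: TT_apply dist_real_def)
qed

lemma exists_p: "\<exists>p. continuous_on UNIV p \<and> bandP p \<and> (\<forall>t\<in>{0..1/10}. fF (p t) = II p t / sin t)"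
proof -
  obtain P where P: "TT P = P" using banach_fix_type[of "1/2" TT] TT_contr by auto
  define p where "p = apply_bcontfun P"
  have cp: "continuous_on UNIV p" unfolding p_def by simp
  have pe: "p t = Tf (bandf p) t" if "t \<in> {0..1/10}" for t
    using TT_apply[of P t] P clampd_id[OF that] unfolding p_def by simp
  have bp: "bandP p" unfolding bandP_def
  proof (intro allI impI)
    fix s :: real assume s: "0 \<le> s \<and> s \<le> 1/10"
    show "\<bar>p s + s/2\<bar> \<le> 20 * s^3" using pe[of s] s Tf_band[OF bandf_cont[OF cp] bandf_band, of s] by simp
  qed
  have bid: "bandf p s = p s" if "s \<in> {0..1/10}" for s
    using bp that unfolding bandP_def by (intro bandf_id) auto
  have "fF (p t) = II p t / sin t" if t: "t \<in> {0..1/10}" for t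
  proof -
    have "II (bandf p) t = II p t" unfolding II_def
      by (rule integral_cong) (use t bid in auto)
    hence "p t = p t - fF (p t) + II p t / sin t" using pe[OF t] bid[OF t] unfolding Tf_def by simp
    thus ?thesis by simp
  qed
  thus ?thesis using cp bp by blast
qed




lemma implicit_deriv:
  fixes F p h :: "real \<Rightarrow> real"
  assumes dF: "(F has_real_derivative D) (at (p x))" and D: "D \<noteq> 0" and cp: "isCont p x"
    and ev: "eventually (\<lambda>t. F (p t) = h t) (nhds x)"
    and dh: "(h has_real_derivative H) (at x)"
  shows "(p has_real_derivative H / D) (at x)"
proof -
  obtain g where g: "\<And>z. F z - F (p x) = g z * (z - p x)" and cg: "isCont g (p x)" and gD: "g (p x) = D"
    using dF unfolding CARAT_DERIV by blast
  have cgp: "isCont (\<lambda>y. g (p y)) x" by (rule isCont_o2[OF cp cg])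
  hence lg: "((\<lambda>y. g (p y)) \<longlongrightarrow> D) (at x)" using gD by (simp add: isCont_def)
  have ne: "eventually (\<lambda>y. g (p y) \<noteq> 0) (at x)" by (rule tendsto_imp_eventually_ne[OF lg D])
  have hx: "F (p x) = h x" using eventually_nhds_x_imp_x[OF ev] .
  have ev': "eventually (\<lambda>t. F (p t) = h t) (at x)"
    using ev unfolding eventually_at_filter by (auto elim: eventually_mono)
  have lh: "((\<lambda>y. (h y - h x) / (y - x)) \<longlongrightarrow> H) (at x)"
    using dh by (simp add: has_field_derivative_iff)
  have "((\<lambda>y. ((h y - h x) / (y - x)) / g (p y)) \<longlongrightarrow> H / D) (at x)"
    by (rule tendsto_divide[OF lh lg D])
  moreover have "eventually (\<lambda>y. ((h y - h x) / (y - x)) / g (p y) = (p y - p x) / (y - x)) (at x)"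
    using ne ev'
  proof eventually_elim
    case (elim y)
    have "h y - h x = g (p y) * (p y - p x)" using g[of "p y"] elim(2) hx by simp
    thus ?case using elim(1) by simp
  qed
  ultimately have "((\<lambda>y. (p y - p x) / (y - x)) \<longlongrightarrow> H / D) (at x)"
    by (rule Lim_transform_eventually)
  thus ?thesis by (simp add: has_field_derivative_iff)
qed

definition U2 :: "(real \<Rightarrow> real) \<Rightarrow> real \<Rightarrow> real" where
  "U2 p t = (if t = 0 then -1/2 else (gG (p t) - cos t / sin t * fF (p t)) / dF (p t))"

locale psol =
  fixes p :: "real \<Rightarrow> real"
  assumes cp: "continuous_on UNIV p" and bp: "bandP p"
    and fp: "\<forall>t\<in>{0..1/10}. fF (p t) = II p t / sin t"

lemma isCont_of: "continuous_on UNIV f \<Longrightarrow> isCont f x"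
  using continuous_on_eq_continuous_at[of UNIV f] by auto



context psol begin

lemma p0: "p 0 = 0" by (rule band_zero[OF bp])

lemma pcont: "isCont p x" by (rule isCont_of[OF cp])

lemma gpcont: "isCont (\<lambda>y. gG (p y)) x" by (rule isCont_o2[OF pcont isCont_of[OF cont_gG]])
lemma fpcont: "isCont (\<lambda>y. fF (p y)) x" by (rule isCont_o2[OF pcont isCont_of[OF cont_fF]])
lemma dpcont: "isCont (\<lambda>y. dF (p y)) x" by (rule isCont_o2[OF pcont isCont_of[OF cont_dF]])

lemma sinW: assumes "0 < t" "t \<le> 1/10" shows "sin t * fF (p t) = II p t"
proof -
  have sp: "sin t > 0" using assms by (intro sin_pos) auto
  have tt: "t \<in> {0..1/10}" using assms by simp
  have "fF (p t) = II p t / sin t" using fp tt by blast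
  hence "sin t * fF (p t) = sin t * (II p t / sin t)" by simp
  also have "\<dots> = II p t" using sp by simp
  finally show ?thesis .
qed

lemma II_at: assumes "0 < t" "t < 1/10" shows "(II p has_real_derivative sin t * gG (p t)) (at t)"
proof -
  have "(II p has_real_derivative sin t * gG (p t)) (at t within {0..1/10})"
  proof (rule II_deriv[OF cp])
    show "t \<in> {0..1/10}" using assms by simp
  qed
  moreover have ti: "t \<in> interior {0..1/10::real}" using assms by simp
  moreover have "at t within {0..1/10::real} = at t" using ti by (rule at_within_interior)
  ultimately show ?thesis by simp
qed

lemma EL_p: assumes "\<theta> \<in> {0<..<1/10}"
  shows "((\<lambda>t. sin t * p t / (1 + (p t)^2)^2) has_real_derivative
           (sin \<theta> * ((p \<theta>)^2 - 1) / (1 + (p \<theta>)^2)^2)) (at \<theta>)"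
proof -
  have "(II p has_real_derivative sin \<theta> * gG (p \<theta>)) (at \<theta>)" using assms by (intro II_at) auto
  hence "((\<lambda>t. sin t * p t / (1 + (p t)^2)^2) has_real_derivative sin \<theta> * gG (p \<theta>)) (at \<theta>)"
  proof (rule has_field_derivative_transform_within_open[OF _ open_greaterThanLessThan assms])
    fix x assume "x \<in> {0<..<1/10::real}"
    thus "II p x = sin x * p x / (1 + (p x)^2)^2" using sinW[of x] by (simp add: fF_def)
  qed
  thus ?thesis by (simp add: gG_def)
qed

lemma deriv_p: assumes "0 < \<theta>" "\<theta> < 1/10" shows "(p has_real_derivative U2 p \<theta>) (at \<theta>)"
proof -
  have sp: "sin \<theta> > 0" using assms by (intro sin_pos) auto
  have dpos: "dF (p \<theta>) \<ge> 3/4" using band_abs2(2)[OF bp, of \<theta>] assms by (intro dF_bounds sq_le) auto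
  have dh: "((\<lambda>t. II p t / sin t) has_real_derivative
      (sin \<theta> * gG (p \<theta>) * sin \<theta> - II p \<theta> * cos \<theta>) / (sin \<theta> * sin \<theta>)) (at \<theta>)"
    using sp by (intro DERIV_divide II_at assms DERIV_sin) auto
  have ev: "eventually (\<lambda>t. fF (p t) = II p t / sin t) (nhds \<theta>)"
  proof -
    have "eventually (\<lambda>t. t \<in> {0<..<1/10}) (nhds \<theta>)"
      using assms by (intro eventually_nhds_in_open) auto
    thus ?thesis by eventually_elim (use fp in auto)
  qed
  have "(p has_real_derivative ((sin \<theta> * gG (p \<theta>) * sin \<theta> - II p \<theta> * cos \<theta>) / (sin \<theta> * sin \<theta>)) / dF (p \<theta>)) (at \<theta>)"
    using dpos by (intro implicit_deriv[OF deriv_fF _ pcont ev dh]) auto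
  moreover have "((sin \<theta> * gG (p \<theta>) * sin \<theta> - II p \<theta> * cos \<theta>) / (sin \<theta> * sin \<theta>)) / dF (p \<theta>) = U2 p \<theta>"
  proof -
    have ii: "II p \<theta> = sin \<theta> * fF (p \<theta>)" using sinW[of \<theta>] assms by auto
    have "(sin \<theta> * gG (p \<theta>) * sin \<theta> - sin \<theta> * fF (p \<theta>) * cos \<theta>) / (sin \<theta> * sin \<theta>)
        = gG (p \<theta>) - cos \<theta> / sin \<theta> * fF (p \<theta>)"
      using sp by (simp add: diff_divide_distrib)
    thus ?thesis unfolding U2_def ii using assms by simp
  qed
  ultimately show ?thesis by simp
qed

end


context psol begin

lemma quot_lim: "((\<lambda>y. p y / y) \<longlongrightarrow> -1/2) (at 0 within {0..<1/10})"
proof -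
  have "((\<lambda>y. p y / y - (-1/2)) \<longlongrightarrow> 0) (at 0 within {0..<1/10})"
  proof (rule Lim_null_comparison)
    show "\<forall>\<^sub>F y in at 0 within {0..<1/10}. norm (p y / y - (-1/2)) \<le> 20 * y^2"
      unfolding eventually_at_filter
    proof (rule always_eventually, intro allI impI)
      fix y :: real assume y: "y \<noteq> 0" "y \<in> {0..<1/10}"
      hence y0: "0 < y" by auto
      have b: "\<bar>p y + y/2\<bar> \<le> 20 * y^3" using bp y unfolding bandP_def by auto
      have eq: "p y / y - (-1/2) = (p y + y/2) / y" using y0 by (simp add: field_simps)
      have "\<bar>(p y + y/2) / y\<bar> = \<bar>p y + y/2\<bar> / y" using y0 by (simp add: abs_divide)
      also have "\<dots> \<le> 20 * y^3 / y" using b y0 by (intro divide_right_mono) auto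
      also have "\<dots> = 20 * y^2" using y0 by (simp add: power3_eq_cube power2_eq_square)
      finally show "norm (p y / y - (-1/2)) \<le> 20 * y^2" using eq by simp
    qed
    have "((\<lambda>y. 20 * y^2) \<longlongrightarrow> 20 * 0^2) (at 0 within {0..<1/10::real})" by (intro tendsto_intros)
    thus "((\<lambda>y. 20 * y^2) \<longlongrightarrow> 0) (at 0 within {0..<1/10::real})" by simp
  qed
  thus ?thesis by (rule LIM_zero_cancel)
qed

lemma deriv_p0: "(p has_real_derivative -1/2) (at 0 within {0..<1/10})"
  using quot_lim p0 by (simp add: has_field_derivative_iff)

lemma U2_cont: "continuous_on {0..<1/10} (U2 p)"
  unfolding continuous_on_eq_continuous_within
proof
  fix t :: real assume t: "t \<in> {0..<1/10}"
  show "continuous (at t within {0..<1/10}) (U2 p)"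
  proof (cases "t = 0")
    case False
    hence t0: "0 < t" "t < 1/10" using t by auto
    have sp: "sin t \<noteq> 0" using t0 sin_pos[of t] by auto
    have dpos: "dF (p t) \<noteq> 0" using band_abs2(2)[OF bp, of t] t0 dF_bounds(1)[OF sq_le, of "p t"] by auto
    have "isCont (\<lambda>y. (gG (p y) - cos y / sin y * fF (p y)) / dF (p y)) t"
      using sp dpos by (intro continuous_intros gpcont fpcont dpcont) auto
    moreover have ev: "eventually (\<lambda>y. U2 p y = (gG (p y) - cos y / sin y * fF (p y)) / dF (p y)) (nhds t)"
    proof -
      have "eventually (\<lambda>y. y \<in> {0<..}) (nhds t)" using t0 by (intro eventually_nhds_in_open) auto
      thus ?thesis by eventually_elim (auto simp: U2_def)
    qed
    ultimately have "isCont (U2 p) t" using isCont_cong[OF ev] by simp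
    thus ?thesis by (rule continuous_at_imp_continuous_at_within)
  next
    case True
    let ?S = "{0..<1/10::real}"
    have l1: "((\<lambda>y. gG (p y)) \<longlongrightarrow> gG 0) (at 0 within ?S)"
      using tendsto_within_subset[OF gpcont[of 0, unfolded isCont_def] subset_UNIV] p0 by simp
    have l2: "((\<lambda>y. dF (p y)) \<longlongrightarrow> dF 0) (at 0 within ?S)"
      using tendsto_within_subset[OF dpcont[of 0, unfolded isCont_def] subset_UNIV] p0 by simp
    have l3: "((\<lambda>y. p y) \<longlongrightarrow> 0) (at 0 within ?S)"
      using tendsto_within_subset[OF pcont[of 0, unfolded isCont_def] subset_UNIV] p0 by simp
    have "((\<lambda>y::real. (sin y - sin 0) / (y - 0)) \<longlongrightarrow> cos 0) (at 0)"
      using DERIV_sin[of 0] by (simp add: has_field_derivative_iff)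
    hence "((\<lambda>y::real. sin y / y) \<longlongrightarrow> 1) (at 0)" by simp
    hence "((\<lambda>y::real. inverse (sin y / y)) \<longlongrightarrow> inverse 1) (at 0)" by (intro tendsto_inverse) auto
    hence "((\<lambda>y::real. y / sin y) \<longlongrightarrow> 1) (at 0)" by simp
    hence l4: "((\<lambda>y. y / sin y) \<longlongrightarrow> 1) (at 0 within ?S)" by (rule tendsto_within_subset) simp
    define r where "r = (\<lambda>y::real. p y / y * (y / sin y))"
    have lr: "(r \<longlongrightarrow> -1/2) (at 0 within ?S)"
      unfolding r_def using tendsto_mult[OF quot_lim l4] by simp
    have l5: "((\<lambda>y. (1 + (p y)^2)^2) \<longlongrightarrow> (1 + 0^2)^2) (at 0 within ?S)"
      by (intro tendsto_intros l3)
    have l6: "(cos \<longlongrightarrow> cos 0) (at 0 within ?S)" by (intro tendsto_intros)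
    have "((\<lambda>y. r y / (1 + (p y)^2)^2) \<longlongrightarrow> (-1/2) / (1 + 0^2)^2) (at 0 within ?S)"
      by (rule tendsto_divide[OF lr l5]) simp
    hence "((\<lambda>y. cos y * (r y / (1 + (p y)^2)^2)) \<longlongrightarrow> cos 0 * ((-1/2) / (1 + 0^2)^2)) (at 0 within ?S)"
      by (rule tendsto_mult[OF l6])
    hence "((\<lambda>y. gG (p y) - cos y * (r y / (1 + (p y)^2)^2)) \<longlongrightarrow> gG 0 - cos 0 * ((-1/2) / (1 + 0^2)^2)) (at 0 within ?S)"
      by (rule tendsto_diff[OF l1])
    hence "((\<lambda>y. (gG (p y) - cos y * (r y / (1 + (p y)^2)^2)) / dF (p y))
        \<longlongrightarrow> (gG 0 - cos 0 * ((-1/2) / (1 + 0^2)^2)) / dF 0) (at 0 within ?S)"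
      by (rule tendsto_divide[OF _ l2]) (simp add: dF_def)
    hence lim: "((\<lambda>y. (gG (p y) - cos y * ((p y / y) * (y / sin y) / (1 + (p y)^2)^2)) / dF (p y))
        \<longlongrightarrow> -1/2) (at 0 within ?S)" by (simp add: gG_def dF_def r_def)
    have "eventually (\<lambda>y. (gG (p y) - cos y * ((p y / y) * (y / sin y) / (1 + (p y)^2)^2)) / dF (p y) = U2 p y) (at 0 within ?S)"
      unfolding eventually_at_filter
    proof (rule always_eventually, intro allI impI)
      fix y :: real assume y: "y \<noteq> 0" "y \<in> ?S"
      hence "sin y \<noteq> 0" using sin_pos[of y] by auto
      thus "(gG (p y) - cos y * ((p y / y) * (y / sin y) / (1 + (p y)^2)^2)) / dF (p y) = U2 p y"
        using y by (simp add: U2_def fF_def)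
    qed
    hence "(U2 p \<longlongrightarrow> -1/2) (at 0 within ?S)" by (rule Lim_transform_eventually[OF lim])
    thus ?thesis using True by (simp add: continuous_within U2_def)
  qed
qed

end


context psol begin

lemma U2_neg: assumes "0 \<le> t" "t < 1/10" shows "U2 p t < 0"
proof (cases "t = 0")
  case True thus ?thesis by (simp add: U2_def)
next
  case False
  hence t0: "0 < t" using assms by auto
  define x where "x = p t"
  have sp: "sin t \<ge> 9/10 * t" using sin_lower[of t] assms by auto
  hence sp0: "sin t > 0" using t0 by linarith
  have b: "\<bar>x + t/2\<bar> \<le> 20 * t^3" using bp assms unfolding bandP_def x_def by auto
  have ax: "\<bar>x\<bar> \<le> 7/10 * t" using band_abs[OF bp, of t] assms x_def by auto
  have xneg: "x \<le> 0" using b cube_small[of t] assms abs_le_D1[OF b] by linarith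
  have dpos: "dF x \<ge> 3/4" using band_abs2(2)[OF bp, of t] assms x_def by (intro dF_bounds sq_le) auto
  have "\<bar>x\<bar>^2 \<le> (7/10 * t)^2" by (rule power_mono[OF ax]) simp
  hence "x^2 \<le> (7/10 * t)^2" by simp
  also have "\<dots> \<le> (1/10)^2" using assms by (intro power_mono) auto
  finally have x2: "x^2 \<le> 1/100" by (simp add: power2_eq_square)
  have g: "gG x \<le> -1 + 3/100" using abs_le_D1[OF gG_plus1[of x]] x2 by linarith
  have fneg: "fF x \<le> 0" using xneg pos1[of x] unfolding fF_def by (simp add: divide_nonpos_pos)
  have fabs: "\<bar>fF x\<bar> \<le> \<bar>x\<bar>" unfolding fF_def by (rule abs_div_le) (simp add: one_le_power)
  have cos01: "0 \<le> cos t" "cos t \<le> 1" using assms pi_gt3 by (auto intro!: cos_ge_zero)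
  have "- (cos t / sin t * fF x) = cos t * (- fF x) / sin t" by simp
  also have "\<dots> \<le> 1 * (- fF x) / sin t" using cos01 fneg sp0 by (intro divide_right_mono mult_right_mono) auto
  also have "\<dots> \<le> (7/10 * t) / sin t" using fabs ax fneg sp0 by (intro divide_right_mono) auto
  also have "\<dots> \<le> (7/10 * t) / (9/10 * t)" using sp t0 by (intro divide_left_mono) auto
  also have "\<dots> = 7/9" using t0 by simp
  finally have "- (cos t / sin t * fF x) \<le> 7/9" .
  hence "gG x - cos t / sin t * fF x < 0" using g by linarith
  thus ?thesis using False dpos unfolding U2_def x_def[symmetric] by (simp add: divide_neg_pos)
qed

end



definition UU :: "real \<Rightarrow> (real \<Rightarrow> real) \<Rightarrow> real \<Rightarrow> real" where
  "UU u0 p t = u0 + integral {0..t} p"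

lemma deriv_interior:
  assumes "(f has_real_derivative D) (at x within S)" "{a<..<b} \<subseteq> S" "a < x" "x < b"
  shows "(f has_real_derivative D) (at x)"
proof -
  have "(f has_real_derivative D) (at x within {a<..<b})"
    using assms(1,2) by (rule has_field_derivative_subset)
  moreover have "at x within {a<..<b} = at x" using assms(3,4) by (intro at_within_open) auto
  ultimately show ?thesis by simp
qed

context psol begin

lemma U_deriv: assumes "t \<in> {0..1/10}" shows "(UU u0 p has_real_derivative p t) (at t within {0..1/10})"
proof -
  have "((\<lambda>x. integral {0..x} p) has_real_derivative p t) (at t within {0..1/10})"
    by (rule integral_has_real_derivative[OF continuous_on_subset[OF cp] assms]) auto
  from DERIV_add[OF DERIV_const[of u0] this] show ?thesis unfolding UU_def[abs_def] by simp
qed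

lemma U_at: assumes "0 < t" "t < 1/10" shows "(UU u0 p has_real_derivative p t) (at t)"
  by (rule deriv_interior[OF U_deriv, of t 0 "1/10"]) (use assms in auto)

lemma U_cont: "continuous_on {0..1/10} (UU u0 p)"
  by (rule DERIV_continuous_on[OF U_deriv])

lemma p_decr: assumes "0 \<le> a" "a < b" "b < 1/10" shows "p b < p a"
proof -
  obtain z where z: "a < z" "z < b" "p b - p a = (b - a) * U2 p z"
    using mvt_deriv[of a b p "U2 p"] assms continuous_on_subset[OF cp] deriv_p by force
  have "U2 p z < 0" using z assms by (intro U2_neg) auto
  hence "(b - a) * U2 p z < 0" using assms by (simp add: mult_pos_neg)
  thus ?thesis using z by simp
qed

lemma concave_main:
  assumes x: "0 \<le> x" and xy: "x < y" and y: "y < 1/10" and t: "0 < t" "t < 1"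
  shows "(1 - t) * UU u0 p x + t * UU u0 p y < UU u0 p ((1 - t) * x + t * y)"
proof -
  define z where "z = (1 - t) * x + t * y"
  have zx: "z - x = t * (y - x)" unfolding z_def by (simp add: algebra_simps)
  have yz: "y - z = (1 - t) * (y - x)" unfolding z_def by (simp add: algebra_simps)
  have "0 < t * (y - x)" using t xy by simp
  hence xz: "x < z" using zx by linarith
  have "0 < (1 - t) * (y - x)" using t xy by simp
  hence zy: "z < y" using yz by linarith
  obtain a where a: "x < a" "a < z" "UU u0 p z - UU u0 p x = (z - x) * p a"
    using mvt_deriv[of x z "UU u0 p" p] xz continuous_on_subset[OF U_cont, of "{x..z}"] U_at x zy y
    by force
  obtain b where b: "z < b" "b < y" "UU u0 p y - UU u0 p z = (y - z) * p b"
    using mvt_deriv[of z y "UU u0 p" p] zy continuous_on_subset[OF U_cont, of "{z..y}"] U_at x xz y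
    by force
  have pab: "p b < p a" using a b x y by (intro p_decr) auto
  have c: "0 < t * (1 - t) * (y - x)" using t xy by simp
  have "t * (1 - t) * (y - x) * p b < t * (1 - t) * (y - x) * p a"
    using mult_strict_left_mono[OF pab c] .
  hence "t * (UU u0 p y - UU u0 p z) < (1 - t) * (UU u0 p z - UU u0 p x)"
    unfolding a(3) b(3) zx yz by (simp add: algebra_simps)
  thus ?thesis unfolding z_def[symmetric] by (simp add: algebra_simps)
qed

lemma U_concave: "strictly_concave_on {0..<1/10} (UU u0 p)"
  unfolding strictly_concave_on_def
proof (intro conjI ballI impI allI)
  show "convex {0..<1/10::real}" by simp
  fix x y t :: real assume x: "x \<in> {0..<1/10}" and y: "y \<in> {0..<1/10}" and ne: "x \<noteq> y"
    and t: "0 < t \<and> t < 1"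
  show "(1 - t) * UU u0 p x + t * UU u0 p y < UU u0 p ((1 - t) * x + t * y)"
  proof (cases "x < y")
    case True thus ?thesis using concave_main[of x y t] x y t by auto
  next
    case False
    hence "y < x" using ne by auto
    hence "(1 - (1 - t)) * UU u0 p y + (1 - t) * UU u0 p x < UU u0 p ((1 - (1 - t)) * y + (1 - t) * x)"
      using concave_main[of y x "1 - t"] x y t by auto
    thus ?thesis by (simp add: algebra_simps)
  qed
qed

lemma U_bigo: "(\<lambda>\<theta>. UU u0 p \<theta> - (u0 - \<theta>^2 / 4)) \<in> O[at_right 0](\<lambda>\<theta>. \<theta>^4)"
proof (rule bigoI[where c=20])
  show "\<forall>\<^sub>F \<theta> in at_right 0. norm (UU u0 p \<theta> - (u0 - \<theta>^2 / 4)) \<le> 20 * norm (\<theta>^4)"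
  proof -
  have ev: "eventually (\<lambda>x. x \<in> {0<..<1/10}) (at_right (0::real))" by (rule eventually_at_right_real) simp
  show ?thesis using ev
  proof eventually_elim
    case (elim th)
    hence th: "0 < th" "th < 1/10" by auto
    define G where "G = (\<lambda>s. UU u0 p s - (u0 - s^2 / 4))"
    have G0: "G 0 = 0" unfolding G_def UU_def by simp
    have cG: "continuous_on {0..th} G" unfolding G_def
      by (intro continuous_intros continuous_on_subset[OF U_cont]) (use th in auto)
    have dG: "(G has_real_derivative p s + s/2) (at s)" if "0 < s" "s < th" for s
    proof -
      have s1: "0 < s" "s < 1/10" using that th by auto
      have U: "(UU u0 p has_real_derivative p s) (at s)" by (rule U_at[OF s1])
      have Q: "((\<lambda>s. u0 - s^2 / 4) has_real_derivative - (s/2)) (at s)"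
        by (auto intro!: derivative_eq_intros)
      from DERIV_diff[OF U Q] show ?thesis unfolding G_def by simp
    qed
    obtain z where z: "0 < z" "z < th" "G th - G 0 = (th - 0) * (p z + z/2)"
      using mvt_deriv[OF th(1) cG dG] by auto
    have bz: "\<bar>p z + z/2\<bar> \<le> 20 * z^3" using bp z th unfolding bandP_def by auto
    also have "\<dots> \<le> 20 * th^3" using z by (intro mult_left_mono power_mono) auto
    finally have "\<bar>G th\<bar> \<le> th * (20 * th^3)" using z(3) G0 th
      by (simp add: abs_mult mult_left_mono)
    thus ?case using th unfolding G_def by (simp add: power_def algebra_simps)
  qed
  qed
qed

end

lemma uniq_core:
  fixes q1 q2 :: "real \<Rightarrow> real"
  assumes c1: "continuous_on {0..<1/10} q1" and c2: "continuous_on {0..<1/10} q2"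
    and z1: "q1 0 = 0" and z2: "q2 0 = 0"
    and e1: "\<And>\<theta>. \<theta> \<in> {0<..<1/10} \<Longrightarrow> ((\<lambda>t. sin t * fF (q1 t)) has_real_derivative sin \<theta> * gG (q1 \<theta>)) (at \<theta>)"
    and e2: "\<And>\<theta>. \<theta> \<in> {0<..<1/10} \<Longrightarrow> ((\<lambda>t. sin t * fF (q2 t)) has_real_derivative sin \<theta> * gG (q2 \<theta>)) (at \<theta>)"
    and b2: "\<And>t. t \<in> {0..<1/10} \<Longrightarrow> \<bar>q2 t\<bar> \<le> 1/10"
  shows "\<forall>t\<in>{0..<1/10}. q1 t = q2 t"
proof (rule ccontr)
  let ?S = "{0..<1/10::real}"
  define A where "A = {t \<in> ?S. q1 t \<noteq> q2 t}"
  assume "\<not> (\<forall>t\<in>?S. q1 t = q2 t)"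
  hence Ane: "A \<noteq> {}" unfolding A_def by auto
  have bdd: "bdd_below A" unfolding A_def by (rule bdd_belowI[of _ 0]) auto
  define t0 where "t0 = Inf A"
  have t0ge: "0 \<le> t0" unfolding t0_def by (rule cInf_greatest[OF Ane]) (auto simp: A_def)
  obtain a0 where a0: "a0 \<in> A" using Ane by auto
  have "t0 \<le> a0" unfolding t0_def by (rule cInf_lower[OF a0 bdd])
  hence t0lt: "t0 < 1/10" using a0 unfolding A_def by auto
  have t0S: "t0 \<in> ?S" using t0ge t0lt by auto
  have below: "q1 s = q2 s" if "0 \<le> s" "s < t0" for s
  proof (rule ccontr)
    assume "q1 s \<noteq> q2 s"
    hence "s \<in> A" unfolding A_def using that t0lt by auto
    hence "t0 \<le> s" unfolding t0_def by (rule cInf_lower[OF _ bdd])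
    thus False using that by simp
  qed
  have cd: "continuous_on ?S (\<lambda>s. q1 s - q2 s)" by (intro continuous_intros c1 c2)
  have eq0: "q1 t0 = q2 t0"
  proof (cases "t0 = 0")
    case True thus ?thesis using z1 z2 by simp
  next
    case False
    hence t0p: "0 < t0" using t0ge by simp
    show ?thesis
    proof (rule ccontr)
      assume ne: "q1 t0 \<noteq> q2 t0"
      then obtain d where d: "d > 0" "\<forall>x'\<in>?S. dist x' t0 < d \<longrightarrow>
          dist (q1 x' - q2 x') (q1 t0 - q2 t0) < \<bar>q1 t0 - q2 t0\<bar>"
        using cd t0S unfolding continuous_on_iff by (metis zero_less_abs_iff right_minus_eq)
      define s where "s = max 0 (t0 - d/2)"
      have s: "0 \<le> s" "s < t0" "dist s t0 < d" using d t0p unfolding s_def dist_real_def by auto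
      hence "dist (q1 s - q2 s) (q1 t0 - q2 t0) < \<bar>q1 t0 - q2 t0\<bar>" using d t0lt by auto
      thus False using below[OF s(1,2)] by (simp add: dist_real_def)
    qed
  qed
  have q1t0: "\<bar>q1 t0\<bar> \<le> 1/10" using eq0 b2[OF t0S] by simp
  obtain eta where eta: "eta > 0" "\<forall>x'\<in>?S. dist x' t0 < eta \<longrightarrow> dist (q1 x') (q1 t0) < 1/10"
    using c1 t0S unfolding continuous_on_iff by (metis zero_less_divide_iff zero_less_numeral zero_less_one)
  define eps where "eps = min (eta/2) (min (1/20) ((1/10 - t0)/2))"
  have e1c: "eps \<le> (1/10 - t0)/2" unfolding eps_def by (rule order_trans[OF min.cobounded2 min.cobounded2])
  have e1a: "eps \<le> eta/2" unfolding eps_def by (rule min.cobounded1)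
  have e1b: "eps \<le> 1/20" unfolding eps_def by (rule order_trans[OF min.cobounded2 min.cobounded1])
  note ee = e1a e1b e1c
  have e0: "0 < eps" using eta t0lt unfolding eps_def by auto
  have e4: "2 * eps \<le> 1/10 - t0" using e1c by simp
  have eps: "0 < eps" "eps < eta" "eps \<le> 1/20" "t0 + eps < 1/10" using e0 ee e4 eta t0lt by linarith+
  define t1 where "t1 = t0 + eps"
  let ?K = "{t0..t1}"
  have KS: "?K \<subseteq> ?S" using t0ge eps unfolding t1_def by auto
  have bK1: "\<bar>q1 s\<bar> \<le> 1/5" if "s \<in> ?K" for s
  proof -
    have "dist s t0 < eta" using that eps unfolding t1_def dist_real_def by auto
    hence "dist (q1 s) (q1 t0) < 1/10" using eta that KS by auto
    thus ?thesis using q1t0 unfolding dist_real_def by linarith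
  qed
  have bK2: "\<bar>q2 s\<bar> \<le> 1/5" if "s \<in> ?K" for s using b2[of s] that KS by auto
  have cabs: "continuous_on ?K (\<lambda>s. \<bar>q1 s - q2 s\<bar>)"
    by (rule continuous_on_rabs[OF continuous_on_subset[OF cd KS]])
  have Kne: "?K \<noteq> {}" using eps unfolding t1_def by auto
  obtain th1 where th1: "th1 \<in> ?K" "\<And>y. y \<in> ?K \<Longrightarrow> \<bar>q1 y - q2 y\<bar> \<le> \<bar>q1 th1 - q2 th1\<bar>"
    using continuous_attains_sup[OF compact_Icc Kne cabs] by blast
  define M where "M = \<bar>q1 th1 - q2 th1\<bar>"
  have M0: "M = 0"
  proof (cases "th1 = t0")
    case True thus ?thesis using eq0 unfolding M_def by simp
  next
    case False
    hence th1p: "t0 < th1" using th1 by auto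
    have th1b: "th1 \<le> t0 + eps" using th1 unfolding t1_def by auto
    define E where "E = (\<lambda>s. sin s * fF (q1 s) - sin s * fF (q2 s))"
    have cE: "continuous_on {t0..th1} E" unfolding E_def
      using th1b KS
      by (intro continuous_intros continuous_on_compose2[OF cont_fF[of UNIV]] continuous_on_subset[OF c1] continuous_on_subset[OF c2]) 
         (auto simp: t1_def)
    have dE: "(E has_real_derivative sin z * gG (q1 z) - sin z * gG (q2 z)) (at z)" if "t0 < z" "z < th1" for z
    proof -
      have zz: "z \<in> {0<..<1/10}" using that t0ge th1b eps by auto
      show ?thesis unfolding E_def by (rule DERIV_diff[OF e1[OF zz] e2[OF zz]])
    qed
    obtain z where z: "t0 < z" "z < th1" "E th1 - E t0 = (th1 - t0) * (sin z * gG (q1 z) - sin z * gG (q2 z))"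
      using mvt_deriv[OF th1p cE dE] by auto
    have Et0: "E t0 = 0" unfolding E_def using eq0 by simp
    have zK: "z \<in> ?K" using z th1 by auto
    have sth: "0 < sin th1" using th1p t0ge th1b eps by (intro sin_pos) auto
    have sz: "0 \<le> sin z" "sin z \<le> sin th1" using z t0ge th1b eps by (auto intro!: sin_nn sin_mono)
    have "\<bar>gG (q1 z) - gG (q2 z)\<bar> \<le> 2 * \<bar>q1 z - q2 z\<bar>" using bK1[OF zK] bK2[OF zK] by (rule lip_gG)
    also have "\<dots> \<le> 2 * M" using th1(2)[OF zK] unfolding M_def by simp
    finally have gz: "\<bar>gG (q1 z) - gG (q2 z)\<bar> \<le> 2 * M" .
    have "\<bar>E th1\<bar> = (th1 - t0) * (sin z * \<bar>gG (q1 z) - gG (q2 z)\<bar>)"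
      using z(3) Et0 th1p sz by (simp add: abs_mult right_diff_distrib[symmetric])
    also have "\<dots> \<le> (1/20) * (sin th1 * (2 * M))"
      using th1p th1b eps sz gz by (intro mult_mono) auto
    finally have up: "\<bar>E th1\<bar> \<le> sin th1 * M / 10" by (simp add: mult.commute)
    have "3/4 * M \<le> \<bar>fF (q1 th1) - fF (q2 th1)\<bar>" unfolding M_def using bK1[OF th1(1)] bK2[OF th1(1)] by (rule fF_low)
    hence "sin th1 * (3/4 * M) \<le> sin th1 * \<bar>fF (q1 th1) - fF (q2 th1)\<bar>" using sth by (intro mult_left_mono) auto
    also have "\<dots> = \<bar>E th1\<bar>" unfolding E_def using sth by (simp add: abs_mult right_diff_distrib[symmetric])
    finally have A: "sin th1 * (3/4 * M) \<le> \<bar>E th1\<bar>" .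
    have B: "sin th1 * (3/4 * M) \<le> sin th1 * M / 10" by (rule order_trans[OF A up])
    have Mp: "0 \<le> M" unfolding M_def by simp
    have sM: "0 \<le> sin th1 * M" using sth Mp by simp
    have "sin th1 * M \<le> 0" using B sM by linarith
    hence "M \<le> 0" using sth by (simp add: mult_le_0_iff)
    thus ?thesis using Mp by linarith
  qed
  have "\<exists>x\<in>A. x < t1" using Ane bdd eps unfolding t1_def t0_def[symmetric] by (subst cInf_less_iff[symmetric]) (auto simp: t0_def)
  then obtain a where a: "a \<in> A" "a < t1" by blast
  have "t0 \<le> a" unfolding t0_def by (rule cInf_lower[OF a(1) bdd])
  hence "a \<in> ?K" using a by auto
  hence "\<bar>q1 a - q2 a\<bar> \<le> 0" using th1(2) M0 unfolding M_def by fastforce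
  thus False using a unfolding A_def by simp
qed




theorem theorem3p8:
  fixes u0 :: real
  shows "\<exists>\<delta>>0. \<exists>u u1 u2. EL_solution u0 \<delta> u u1 u2 \<and>
     (\<forall>v v1 v2. EL_solution u0 \<delta> v v1 v2 \<longrightarrow> (\<forall>t\<in>{0..<\<delta>}. v t = u t)) \<and>
     u2 0 = -1/2 \<and>
     strictly_concave_on {0..<\<delta>} u \<and>
     (\<lambda>\<theta>. u \<theta> - (u0 - \<theta>^2 / 4)) \<in> O[at_right 0](\<lambda>\<theta>. \<theta>^4)"
proof -
  obtain p where cp: "continuous_on UNIV p" and bp: "bandP p"
    and fp: "\<forall>t\<in>{0..1/10}. fF (p t) = II p t / sin t"
    using exists_p by blast
  interpret P: psol p by unfold_locales (rule cp bp fp)+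
  let ?S = "{0..<1/10::real}"
  have d1: "(UU u0 p has_real_derivative p t) (at t within ?S)" if t: "t \<in> ?S" for t
  proof -
    have t': "t \<in> {0..1/10}" using t by auto
    have "(UU u0 p has_real_derivative p t) (at t within {0..1/10})" by (rule P.U_deriv[OF t'])
    thus ?thesis by (rule has_field_derivative_subset) auto
  qed
  have d2: "(p has_real_derivative U2 p t) (at t within ?S)" if t: "t \<in> ?S" for t
  proof (cases "t = 0")
    case True thus ?thesis using P.deriv_p0 by (simp add: U2_def)
  next
    case False
    hence t': "0 < t" "t < 1/10" using t by auto
    show ?thesis by (rule has_field_derivative_at_within[OF P.deriv_p[OF t']])
  qed
  have EL: "EL_solution u0 (1/10) (UU u0 p) p (U2 p)"
    unfolding EL_solution_def C2_on_halfopen_def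
  proof (intro conjI)
    show "\<forall>t\<in>?S. (UU u0 p has_real_derivative p t) (at t within ?S) \<and>
                    (p has_real_derivative U2 p t) (at t within ?S)" using d1 d2 by blast
    show "continuous_on ?S (U2 p)" by (rule P.U2_cont)
    show "UU u0 p 0 = u0" by (simp add: UU_def)
    show "p 0 = 0" by (rule P.p0)
    show "\<forall>\<theta>\<in>{0<..<1/10}. ((\<lambda>t. sin t * p t / (1 + (p t)^2)^2) has_real_derivative
           (sin \<theta> * ((p \<theta>)^2 - 1) / (1 + (p \<theta>)^2)^2)) (at \<theta>)" using P.EL_p by blast
  qed
  have uniq: "\<forall>t\<in>?S. v t = UU u0 p t" if vs: "EL_solution u0 (1/10) v v1 v2" for v v1 v2
  proof -
    have dv: "\<And>t. t \<in> ?S \<Longrightarrow> (v has_real_derivative v1 t) (at t within ?S)"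
      and dv1: "\<And>t. t \<in> ?S \<Longrightarrow> (v1 has_real_derivative v2 t) (at t within ?S)"
      and v0: "v 0 = u0" and v10: "v1 0 = 0"
      and ELv: "\<And>\<theta>. \<theta> \<in> {0<..<1/10} \<Longrightarrow> ((\<lambda>t. sin t * v1 t / (1 + (v1 t)^2)^2) has_real_derivative
           (sin \<theta> * ((v1 \<theta>)^2 - 1) / (1 + (v1 \<theta>)^2)^2)) (at \<theta>)"
      using vs unfolding EL_solution_def C2_on_halfopen_def by auto
    have cv1: "continuous_on ?S v1" by (rule DERIV_continuous_on[OF dv1])
    have cv: "continuous_on ?S v" by (rule DERIV_continuous_on[OF dv])
    have fe: "\<And>q. (\<lambda>t. sin t * fF (q t)) = (\<lambda>t. sin t * q t / (1 + (q t)^2)^2)"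
      by (simp add: fF_def fun_eq_iff)
    have ge: "\<And>q \<theta>. sin \<theta> * gG (q \<theta>) = sin \<theta> * ((q \<theta>)^2 - 1) / (1 + (q \<theta>)^2)^2"
      by (simp add: gG_def)
    have e1: "((\<lambda>t. sin t * fF (v1 t)) has_real_derivative sin \<theta> * gG (v1 \<theta>)) (at \<theta>)"
      if "\<theta> \<in> {0<..<1/10}" for \<theta>
      unfolding fe ge using ELv[OF that] .
    have e2: "((\<lambda>t. sin t * fF (p t)) has_real_derivative sin \<theta> * gG (p \<theta>)) (at \<theta>)"
      if "\<theta> \<in> {0<..<1/10}" for \<theta>
      unfolding fe ge using P.EL_p[OF that] .
    have b2: "\<bar>p t\<bar> \<le> 1/10" if "t \<in> ?S" for t
      using band_abs2(1)[OF bp, of t] that by auto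
    have eqp: "\<forall>t\<in>?S. v1 t = p t"
      by (rule uniq_core[OF cv1 continuous_on_subset[OF cp] v10 P.p0 e1 e2 b2]) auto
    show ?thesis
    proof
      fix t assume t: "t \<in> ?S"
      show "v t = UU u0 p t"
      proof (cases "t = 0")
        case True thus ?thesis using v0 by (simp add: UU_def)
      next
        case False
        hence t0: "0 < t" "t < 1/10" using t by auto
        define G where "G = (\<lambda>s. v s - UU u0 p s)"
        have cG: "continuous_on {0..t} G" unfolding G_def using t0
          by (intro continuous_intros continuous_on_subset[OF cv] continuous_on_subset[OF P.U_cont]) auto
        have dG: "(G has_real_derivative 0) (at z)" if z: "0 < z" "z < t" for z
        proof -
          have zS: "z \<in> ?S" using z t0 by auto
          have "(v has_real_derivative v1 z) (at z)"
            by (rule deriv_interior[OF dv[OF zS], of 0 "1/10"]) (use z t0 in auto)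
          moreover have "(UU u0 p has_real_derivative p z) (at z)" using z t0 by (intro P.U_at) auto
          ultimately have "(G has_real_derivative v1 z - p z) (at z)" unfolding G_def by (rule DERIV_diff)
          thus ?thesis using eqp zS by simp
        qed
        obtain z where "0 < z" "z < t" "G t - G 0 = (t - 0) * 0"
          using mvt_deriv[OF t0(1) cG dG] by blast
        moreover have "G 0 = 0" unfolding G_def using v0 by (simp add: UU_def)
        ultimately show ?thesis unfolding G_def by simp
      qed
    qed
  qed
  have A: "\<forall>v v1 v2. EL_solution u0 (1/10) v v1 v2 \<longrightarrow> (\<forall>t\<in>?S. v t = UU u0 p t)"
    using uniq by blast
  have B: "U2 p 0 = -1/2" by (simp add: U2_def)
  have C: "strictly_concave_on ?S (UU u0 p)" by (rule P.U_concave)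
  have D: "(\<lambda>\<theta>. UU u0 p \<theta> - (u0 - \<theta>^2 / 4)) \<in> O[at_right 0](\<lambda>\<theta>. \<theta>^4)" by (rule P.U_bigo)
  have pos: "(1/10::real) > 0" by simp
  show ?thesis
    by (rule exI[of _ "1/10"], rule conjI[OF pos], rule exI[of _ "UU u0 p"], rule exI[of _ p], rule exI[of _ "U2 p"])
       (intro conjI EL A B C D)
qed



end
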